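(* Let $K$ be a totally ordered quasi-field of characteristic $1$ and let $x\in K$. (a) The set of polynomials $P\in K[X]$ admitting $x$ as a root is the ideal $J$ of $K[X]$ generated by the polynomials $X^k+x^k$, $k\ge 1$. (b) The set of rational polynomials in $K\{X\}$ admitting $x$ as a root is the ideal of $K\{X\}$ generated by (the image of) $X+x$.
   Context: A quasi-field of characteristic $1$ is a commutative semiring $K$ with $1+1=1$ in which every nonzero element is multiplicatively invertible; it is ordered by $a\le b$ iff $a+b=b$, and totally ordered means this order is total (so $a+b=\max(a,b)$). A point $x\in K$ is a root of $P\in K[X]$ if one can write $P=P_1+P_2$ with $P_1,P_2$ having disjoint sets of monomials and $P_1(x)=P_2(x)$ (equivalently, $P(x)=0$ or the maximal value of the monomials of $P$ at $x$ is attained by at least two distinct monomials). The semiring $K[X]$ has no zero divisors but is not cancellative; $K\{X\}$ denotes its image in its quasi-field of fractions, i.e. the quotient of $K[X]$ by the relation $P\sim Q$ iff $RP=RQ$ for some nonzero $R$; its elements are called rational polynomials, and a rational polynomial has $x$ as root if one (equivalently every) representative does. An ideal generated by a set $S$ consists of finite sums of multiples of elements of $S$. *)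

theory Defs
  imports "HOL-Computational_Algebra.Polynomial"
begin

class qf_char1 = comm_semiring_1 +
  assumes one_add_one_qf: "1 + 1 = 1"
  assumes nonzero_invertible: "a \<noteq> 0 \<Longrightarrow> \<exists>b. a * b = 1"
begin

subclass semiring_no_zero_divisors
proof
  fix a b :: 'a assume a: "a \<noteq> 0" and b: "b \<noteq> 0"
  show "a * b \<noteq> 0"
  proof
    assume ab: "a * b = 0"
    obtain c where c: "a * c = 1" using nonzero_invertible[OF a] by blast
    have "b = (a * c) * b" using c by simp
    also have "\<dots> = c * (a * b)" by (simp add: ac_simps)
    also have "\<dots> = 0" using ab by simp
    finally show False using b by simp
  qed
qed

end

definition qf_le :: "'a::qf_char1 \<Rightarrow> 'a \<Rightarrow> bool" where
  "qf_le a b \<longleftrightarrow> a + b = b"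

definition totally_ordered_qf :: "'a::qf_char1 itself \<Rightarrow> bool" where
  "totally_ordered_qf _ \<longleftrightarrow> (\<forall>a b :: 'a. qf_le a b \<or> qf_le b a)"

definition is_root :: "'a::comm_semiring_0 poly \<Rightarrow> 'a \<Rightarrow> bool" where
  "is_root P x \<longleftrightarrow> (\<exists>P1 P2. P = P1 + P2 \<and> (\<forall>n. coeff P1 n = 0 \<or> coeff P2 n = 0)
       \<and> poly P1 x = poly P2 x)"

definition ideal_gen :: "'a::comm_semiring_0 set \<Rightarrow> 'a set" where
  "ideal_gen S = {p. \<exists>(n::nat) f g. (\<forall>i<n. g i \<in> S) \<and> p = (\<Sum>i<n. f i * g i)}"

definition ratrel :: "'a::qf_char1 poly \<Rightarrow> 'a poly \<Rightarrow> bool" where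
  "ratrel P Q \<longleftrightarrow> (\<exists>R. R \<noteq> 0 \<and> R * P = R * Q)"

lemma ratrel_transI:
  fixes x y z R S :: "'a::qf_char1 poly"
  assumes R: "R \<noteq> 0" "R * x = R * y" and S: "S \<noteq> 0" "S * y = S * z"
  shows "ratrel x z"
proof -
  have nz: "S * R \<noteq> 0" using R S by simp
  have "(S * R) * x = S * (R * x)" by (simp add: ac_simps)
  also have "\<dots> = S * (R * y)" using R(2) by simp
  also have "\<dots> = R * (S * y)" by (simp add: ac_simps)
  also have "\<dots> = R * (S * z)" using S(2) by simp
  also have "\<dots> = (S * R) * z" by (simp add: ac_simps)
  finally have "(S * R) * x = (S * R) * z" .
  with nz show ?thesis unfolding ratrel_def by blast
qed

lemma ratrel_refl: "ratrel a a"
  unfolding ratrel_def by (rule exI[of _ 1]) simp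

lemma ratrel_sym: "ratrel a b \<Longrightarrow> ratrel b a"
  unfolding ratrel_def by (metis (no_types))

lemma ratrel_trans: "ratrel x y \<Longrightarrow> ratrel y z \<Longrightarrow> ratrel x z"
proof -
  assume "ratrel x y" "ratrel y z"
  then obtain R S where "R \<noteq> 0" "R * x = R * y" "S \<noteq> 0" "S * y = S * z"
    unfolding ratrel_def by blast
  then show "ratrel x z" by (rule ratrel_transI)
qed

lemma ratrel_equivp: "equivp ratrel"
  by (rule equivpI; rule reflpI sympI transpI)
     (erule ratrel_refl ratrel_sym ratrel_trans | rule ratrel_refl | assumption)+

quotient_type (overloaded) 'a ratpoly = "'a::qf_char1 poly" / ratrel
  by (rule ratrel_equivp)

lemma ratrel_add:
  assumes "ratrel a b" "ratrel c d" shows "ratrel (a + c) (b + d)"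
proof -
  from assms obtain R S where R: "R \<noteq> 0" "R * a = R * b" and S: "S \<noteq> 0" "S * c = S * d"
    unfolding ratrel_def by blast
  have nz: "R * S \<noteq> 0" using R S by simp
  have "(R * S) * (a + c) = S * (R * a) + R * (S * c)" by (simp add: algebra_simps)
  also have "\<dots> = S * (R * b) + R * (S * d)" using R(2) S(2) by simp
  also have "\<dots> = (R * S) * (b + d)" by (simp add: algebra_simps)
  finally have "(R * S) * (a + c) = (R * S) * (b + d)" .
  with nz show ?thesis unfolding ratrel_def by blast
qed

lemma ratrel_mult:
  assumes "ratrel a b" "ratrel c d" shows "ratrel (a * c) (b * d)"
proof -
  from assms obtain R S where R: "R \<noteq> 0" "R * a = R * b" and S: "S \<noteq> 0" "S * c = S * d"
    unfolding ratrel_def by blast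
  have nz: "R * S \<noteq> 0" using R S by simp
  have "(R * S) * (a * c) = (R * a) * (S * c)" by (simp add: algebra_simps)
  also have "\<dots> = (R * b) * (S * d)" using R(2) S(2) by simp
  also have "\<dots> = (R * S) * (b * d)" by (simp add: algebra_simps)
  finally have "(R * S) * (a * c) = (R * S) * (b * d)" .
  with nz show ?thesis unfolding ratrel_def by blast
qed

instantiation ratpoly :: (qf_char1) comm_semiring_1
begin

lift_definition zero_ratpoly :: "'a ratpoly" is "0" .
lift_definition one_ratpoly :: "'a ratpoly" is "1" .
lift_definition plus_ratpoly :: "'a ratpoly \<Rightarrow> 'a ratpoly \<Rightarrow> 'a ratpoly" is "(+)"
  by (rule ratrel_add)
lift_definition times_ratpoly :: "'a ratpoly \<Rightarrow> 'a ratpoly \<Rightarrow> 'a ratpoly" is "(*)"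
  by (rule ratrel_mult)

instance
proof
  fix a b c :: "'a ratpoly"
  show "a + b + c = a + (b + c)" by transfer (simp add: add.assoc ratrel_refl)
  show "a + b = b + a" by transfer (simp add: add.commute ratrel_refl)
  show "0 + a = a" by transfer (simp add: ratrel_refl)
  show "a * b * c = a * (b * c)" by transfer (simp add: mult.assoc ratrel_refl)
  show "a * b = b * a" by transfer (simp add: mult.commute ratrel_refl)
  show "1 * a = a" by transfer (simp add: ratrel_refl)
  show "(a + b) * c = a * c + b * c" by transfer (simp add: distrib_right ratrel_refl)
  show "0 * a = 0" by transfer (simp add: ratrel_refl)
  show "a * 0 = 0" by transfer (simp add: ratrel_refl)
  show "(0::'a ratpoly) \<noteq> 1"
  proof transfer
    show "\<not> ratrel (0::'a poly) 1" unfolding ratrel_def by simp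
  qed
qed

end

definition rat_of_poly :: "'a::qf_char1 poly \<Rightarrow> 'a ratpoly" where
  "rat_of_poly = abs_ratpoly"

text \<open>A rational polynomial has x as a root if one (equivalently every) representative does.\<close>
definition rat_is_root :: "'a::qf_char1 ratpoly \<Rightarrow> 'a \<Rightarrow> bool" where
  "rat_is_root F x \<longleftrightarrow> (\<exists>P. rat_of_poly P = F \<and> is_root P x)"

end

theory Submission imports Defs begin

lemma qf_add_idem: "(a::'a::qf_char1) + a = a"
proof -
  have "a + a = a * (1 + 1)" by (simp only: distrib_left mult_1_right)
  then show ?thesis by (simp only: one_add_one_qf mult_1_right)
qed

lemma qf_zero_sum: "(a::'a::qf_char1) + b = 0 \<Longrightarrow> a = 0"
proof -
  assume h: "a + b = 0"
  have "a = a + (a + b)" using h by simp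
  also have "\<dots> = (a + a) + b" by (simp add: add.assoc)
  also have "\<dots> = 0" using h by (simp add: qf_add_idem)
  finally show ?thesis .
qed

lemma qf_le_refl: "qf_le (a::'a::qf_char1) a" by (simp add: qf_le_def qf_add_idem)

lemma qf_le_antisym: "qf_le (a::'a::qf_char1) b \<Longrightarrow> qf_le b a \<Longrightarrow> a = b"
  unfolding qf_le_def by (simp add: add.commute)

lemma qf_le_trans: "qf_le (a::'a::qf_char1) b \<Longrightarrow> qf_le b c \<Longrightarrow> qf_le a c"
  unfolding qf_le_def by (metis add.assoc)

lemma qf_le_mult: "qf_le (a::'a::qf_char1) b \<Longrightarrow> qf_le (c*a) (c*b)"
  unfolding qf_le_def by (metis distrib_left)

lemma qf_le_zero: "qf_le (a::'a::qf_char1) 0 \<Longrightarrow> a = 0"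
  by (simp add: qf_le_def)

lemma qf_le_sum: "finite A \<Longrightarrow> n \<in> A \<Longrightarrow> qf_le ((f n)::'a::qf_char1) (sum f A)"
  unfolding qf_le_def
  by (simp add: sum.remove add.assoc[symmetric] qf_add_idem)

lemma qf_sum_le: "finite A \<Longrightarrow> (\<And>n. n \<in> A \<Longrightarrow> qf_le (f n) (c::'a::qf_char1)) \<Longrightarrow> qf_le (sum f A) c"
proof (induction A rule: finite_induct)
  case empty then show ?case by (simp add: qf_le_def)
next
  case (insert a A) then show ?case unfolding qf_le_def by (simp add: add.assoc)
qed

lemma qf_sum_in:
  assumes tot: "totally_ordered_qf TYPE('a::qf_char1)"
  shows "finite A \<Longrightarrow> A \<noteq> {} \<Longrightarrow> \<exists>n\<in>A. sum f A = (f n :: 'a)"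
proof (induction A rule: finite_induct)
  case empty then show ?case by simp
next
  case (insert a A)
  show ?case
  proof (cases "A = {}")
    case True then show ?thesis by simp
  next
    case False
    then obtain n where n: "n \<in> A" "sum f A = f n" using insert by blast
    have "qf_le (f a) (f n) \<or> qf_le (f n) (f a)" using tot unfolding totally_ordered_qf_def by blast
    then show ?thesis using insert n unfolding qf_le_def by (auto simp: add.commute)
  qed
qed

lemma qf_pow_nz: "(x::'a::qf_char1) \<noteq> 0 \<Longrightarrow> x ^ n \<noteq> 0"
  by (induct n) auto

lemma poly_mono_le: "qf_le (coeff P n * x ^ n) (poly P (x::'a::qf_char1))"
proof (cases "n \<le> degree P")
  case True then show ?thesis unfolding poly_altdef by (intro qf_le_sum) auto
next
  case False then show ?thesis by (simp add: coeff_eq_0 qf_le_def)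
qed

definition maxroot :: "'a::qf_char1 poly \<Rightarrow> 'a \<Rightarrow> bool" where
  "maxroot P x \<longleftrightarrow> poly P x = 0 \<or>
     (\<exists>i j. i \<noteq> j \<and> coeff P i * x ^ i = poly P x \<and> coeff P j * x ^ j = poly P x)"

lemma root_imp_maxroot:
  assumes tot: "totally_ordered_qf TYPE('a::qf_char1)" and r: "is_root P (x::'a)"
  shows "maxroot P x"
proof -
  obtain P1 P2 where P: "P = P1 + P2" and dis: "\<forall>n. coeff P1 n = 0 \<or> coeff P2 n = 0"
    and eq: "poly P1 x = poly P2 x" using r unfolding is_root_def by blast
  have PM: "poly P x = poly P1 x" using P eq by (simp add: qf_add_idem)
  show ?thesis
  proof (cases "poly P x = 0")
    case True then show ?thesis by (simp add: maxroot_def)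
  next
    case False
    obtain i where i: "coeff P1 i * x ^ i = poly P1 x"
      using qf_sum_in[OF tot, of "{..degree P1}" "\<lambda>n. coeff P1 n * x ^ n"]
      unfolding poly_altdef by auto
    obtain j where j: "coeff P2 j * x ^ j = poly P2 x"
      using qf_sum_in[OF tot, of "{..degree P2}" "\<lambda>n. coeff P2 n * x ^ n"]
      unfolding poly_altdef by auto
    have c1: "coeff P1 i \<noteq> 0" using i False PM by auto
    have c2: "coeff P2 j \<noteq> 0" using j False PM eq by auto
    have ci: "coeff P i = coeff P1 i" using dis c1 P by (metis add_0_right coeff_add)
    have cj: "coeff P j = coeff P2 j" using dis c2 P by (metis add_0 coeff_add)
    have "i \<noteq> j" using dis c1 c2 by metis
    then have "\<exists>i j. i \<noteq> j \<and> coeff P i * x ^ i = poly P x \<and> coeff P j * x ^ j = poly P x"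
      using i j ci cj PM eq by (intro exI[of _ i] exI[of _ j]) simp
    then show ?thesis unfolding maxroot_def by blast
  qed
qed

lemma maxroot_imp_root:
  assumes m: "maxroot P (x::'a::qf_char1)"
  shows "is_root P x"
proof (cases "poly P x = 0")
  case True
  show ?thesis unfolding is_root_def
    by (rule exI[of _ 0], rule exI[of _ P]) (simp add: True)
next
  case False
  then obtain i j where ij: "i \<noteq> j" "coeff P i * x ^ i = poly P x" "coeff P j * x ^ j = poly P x"
    using m unfolding maxroot_def by blast
  have cj: "coeff P j \<noteq> 0" using ij False by auto
  have ci: "coeff P i \<noteq> 0" using ij False by auto
  define A where "A = {..degree P} - {i}"
  have fA: "finite A" by (simp add: A_def)
  have jA: "j \<in> A" using ij cj le_degree unfolding A_def by auto
  define P1 where "P1 = monom (coeff P i) i"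
  define P2 where "P2 = (\<Sum>n\<in>A. monom (coeff P n) n)"
  have c2: "coeff P2 n = (if n \<in> A then coeff P n else 0)" for n
    unfolding P2_def coeff_sum by (simp add: coeff_monom fA)
  have "P = P1 + P2"
  proof (rule poly_eqI)
    fix n
    show "coeff P n = coeff (P1 + P2) n"
      unfolding coeff_add c2 P1_def A_def
      by (auto simp: coeff_monom coeff_eq_0)
  qed
  moreover have "\<forall>n. coeff P1 n = 0 \<or> coeff P2 n = 0"
    unfolding P1_def c2 A_def by (auto simp: coeff_monom)
  moreover have "poly P1 x = poly P2 x"
  proof -
    have "poly P2 x = (\<Sum>n\<in>A. coeff P n * x ^ n)" unfolding P2_def poly_sum poly_monom ..
    moreover have "qf_le (\<Sum>n\<in>A. coeff P n * x ^ n) (poly P x)"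
      using fA by (intro qf_sum_le poly_mono_le)
    moreover have "qf_le (poly P x) (\<Sum>n\<in>A. coeff P n * x ^ n)"
      using qf_le_sum[OF fA jA, of "\<lambda>n. coeff P n * x ^ n"] ij by simp
    ultimately have "poly P2 x = poly P x" using qf_le_antisym by metis
    then show ?thesis unfolding P1_def poly_monom using ij by simp
  qed
  ultimately show ?thesis unfolding is_root_def by blast
qed

lemma root_iff_maxroot:
  assumes tot: "totally_ordered_qf TYPE('a::qf_char1)"
  shows "is_root P (x::'a) \<longleftrightarrow> maxroot P x"
  using root_imp_maxroot[OF tot] maxroot_imp_root by blast

lemma maxroot_add_aux:
  assumes p: "maxroot P (x::'a::qf_char1)" and q: "maxroot Q x" and le: "qf_le (poly Q x) (poly P x)"
  shows "maxroot (P + Q) x"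
proof -
  have val: "poly (P + Q) x = poly P x" using le by (simp add: qf_le_def add.commute)
  show ?thesis
  proof (cases "poly P x = 0")
    case True then show ?thesis using val by (simp add: maxroot_def)
  next
    case False
    then obtain i j where ij: "i \<noteq> j" "coeff P i * x ^ i = poly P x" "coeff P j * x ^ j = poly P x"
      using p unfolding maxroot_def by blast
    have k: "coeff (P + Q) k * x ^ k = poly P x" if "coeff P k * x ^ k = poly P x" for k
    proof -
      have "qf_le (coeff Q k * x ^ k) (poly P x)" using poly_mono_le le qf_le_trans by blast
      then show ?thesis using that by (simp add: distrib_right qf_le_def add.commute)
    qed
    show ?thesis unfolding maxroot_def val using ij k by blast
  qed
qed

lemma maxroot_add:
  assumes tot: "totally_ordered_qf TYPE('a::qf_char1)"
    and p: "maxroot P (x::'a)" and q: "maxroot Q x"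
  shows "maxroot (P + Q) x"
proof -
  have "qf_le (poly Q x) (poly P x) \<or> qf_le (poly P x) (poly Q x)"
    using tot unfolding totally_ordered_qf_def by blast
  then show ?thesis using maxroot_add_aux[OF p q] maxroot_add_aux[OF q p] by (auto simp: add.commute)
qed

lemma maxroot_zero: "maxroot 0 (x::'a::qf_char1)" by (simp add: maxroot_def)

lemma maxroot_monom_mult:
  assumes p: "maxroot P (x::'a::qf_char1)"
  shows "maxroot (monom a k * P) x"
proof (cases "poly P x = 0")
  case True then show ?thesis by (simp add: maxroot_def)
next
  case False
  then obtain i j where ij: "i \<noteq> j" "coeff P i * x ^ i = poly P x" "coeff P j * x ^ j = poly P x"
    using p unfolding maxroot_def by blast
  have k: "coeff (monom a k * P) (l + k) * x ^ (l + k) = poly (monom a k * P) x"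
    if "coeff P l * x ^ l = poly P x" for l
  proof -
    have "coeff (monom a k * P) (l + k) * x ^ (l + k) = a * x ^ k * (coeff P l * x ^ l)"
      unfolding coeff_monom_mult by (simp add: power_add mult_ac)
    then show ?thesis using that by (simp add: poly_monom)
  qed
  have "i + k \<noteq> j + k" using ij by simp
  then show ?thesis unfolding maxroot_def using k ij by blast
qed

lemma maxroot_sum:
  assumes tot: "totally_ordered_qf TYPE('a::qf_char1)"
  shows "finite A \<Longrightarrow> (\<And>a. a \<in> A \<Longrightarrow> maxroot (f a) (x::'a)) \<Longrightarrow> maxroot (sum f A) x"
  by (induction A rule: finite_induct) (auto simp: maxroot_zero intro: maxroot_add[OF tot])

lemma maxroot_mult:
  assumes tot: "totally_ordered_qf TYPE('a::qf_char1)" and p: "maxroot P (x::'a)"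
  shows "maxroot (R * P) x"
proof -
  have "R * P = (\<Sum>k\<le>degree R. monom (coeff R k) k * P)"
    by (subst poly_as_sum_of_monoms[of R, symmetric]) (simp add: sum_distrib_right)
  also have "maxroot \<dots> x"
    by (rule maxroot_sum[OF tot]) (auto intro: maxroot_monom_mult p)
  finally show ?thesis .
qed

lemma maxroot_gen:
  assumes "k \<ge> 1"
  shows "maxroot (monom 1 k + [:x ^ k:]) (x::'a::qf_char1)"
proof -
  have "coeff (monom 1 k + [:x ^ k:]) k * x ^ k = x ^ k" using assms by (simp add: coeff_pCons split: nat.split)
  moreover have "coeff (monom 1 k + [:x ^ k:]) 0 * x ^ 0 = x ^ k" using assms by simp
  moreover have "poly (monom 1 k + [:x ^ k:]) x = x ^ k" by (simp add: poly_monom qf_add_idem)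
  ultimately show ?thesis unfolding maxroot_def using assms
    by (metis not_one_le_zero)
qed

lemma ig_zero: "0 \<in> ideal_gen S"
  unfolding ideal_gen_def by (rule CollectI, rule exI[of _ 0]) simp

lemma ig_step: "p \<in> ideal_gen S \<Longrightarrow> s \<in> S \<Longrightarrow> p + c * s \<in> ideal_gen S"
proof -
  assume "p \<in> ideal_gen S" "s \<in> S"
  then obtain n :: nat and f g where h: "\<forall>i<n. g i \<in> S" "p = (\<Sum>i<n. f i * g i)" unfolding ideal_gen_def by blast
  define f' where "f' = f(n := c)"
  define g' where "g' = g(n := s)"
  have "\<forall>i<Suc n. g' i \<in> S" using h \<open>s \<in> S\<close> by (auto simp: g'_def less_Suc_eq)
  moreover have "p + c * s = (\<Sum>i<Suc n. f' i * g' i)"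
    using h by (simp add: f'_def g'_def)
  ultimately show ?thesis unfolding ideal_gen_def by blast
qed

lemma ig_gen: "s \<in> S \<Longrightarrow> c * s \<in> ideal_gen S"
  using ig_step[OF ig_zero] by fastforce

lemma ig_add: "p \<in> ideal_gen S \<Longrightarrow> q \<in> ideal_gen S \<Longrightarrow> p + q \<in> ideal_gen S"
proof -
  assume p: "p \<in> ideal_gen S" and "q \<in> ideal_gen S"
  then obtain n :: nat and f g where h: "\<forall>i<n. g i \<in> S" "q = (\<Sum>i<n. f i * g i)" unfolding ideal_gen_def by blast
  have "p + (\<Sum>i<m. f i * g i) \<in> ideal_gen S" if "m \<le> n" for m
    using that
  proof (induction m)
    case 0 then show ?case using p by simp
  next
    case (Suc m)
    then have "p + (\<Sum>i<m. f i * g i) + f m * g m \<in> ideal_gen S"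
      using h by (intro ig_step) auto
    then show ?case by (simp add: add.assoc)
  qed
  then show ?thesis using h by simp
qed

lemma ig_sum: "finite A \<Longrightarrow> (\<And>a. a \<in> A \<Longrightarrow> h a \<in> ideal_gen S) \<Longrightarrow> sum h A \<in> ideal_gen S"
  by (induction A rule: finite_induct) (auto simp: ig_zero intro: ig_add)

lemma ig_elim: "p \<in> ideal_gen S \<Longrightarrow> \<exists>(n::nat) f g. (\<forall>i<n. g i \<in> S) \<and> p = (\<Sum>i<n. f i * g i)"
  unfolding ideal_gen_def by blast

lemma monom_mult_const: "monom a m * [:b:] = monom (a * b) m"
  by (metis monom_0 mult_monom add_0_right)

lemma maxroot_in_J:
  assumes tot: "totally_ordered_qf TYPE('a::qf_char1)" and m: "maxroot P (x::'a)"
  shows "P \<in> ideal_gen {monom 1 k + [:x ^ k:] | k. k \<ge> 1}"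
    (is "_ \<in> ideal_gen ?S")
proof (cases "poly P x = 0")
  case True
  show ?thesis
  proof (cases "x = 0")
    case True
    obtain a Q where PQ: "P = pCons a Q" by (cases P)
    have "a = 0" using \<open>poly P x = 0\<close> True PQ by (simp add: poly_0_coeff_0)
    have g: "monom 1 1 + [:x ^ 1:] \<in> ?S" by blast
    have "P = Q * (monom 1 1 + [:x ^ 1:])"
      using PQ \<open>a = 0\<close> True by (simp add: monom_Suc monom_0 mult.commute)
    then show ?thesis using ig_gen[OF g] by simp
  next
    case False
    have "coeff P n = 0" for n
    proof -
      have "coeff P n * x ^ n = 0" using poly_mono_le[of P n x] \<open>poly P x = 0\<close> qf_le_zero by metis
      then show ?thesis using qf_pow_nz[OF False] by simp
    qed
    then have "P = 0" by (simp add: poly_eq_iff)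
    then show ?thesis by (simp add: ig_zero)
  qed
next
  case False
  define M where "M = poly P x"
  obtain i j where ij: "i \<noteq> j" "coeff P i * x ^ i = M" "coeff P j * x ^ j = M"
    using m False unfolding maxroot_def M_def by blast
  have M0: "M \<noteq> 0" using False M_def by simp
  have x0: "x \<noteq> 0"
  proof
    assume "x = 0"
    then have "i = 0" "j = 0" using ij M0 by (auto simp: power_0_left split: if_splits)
    then show False using ij by simp
  qed
  obtain y where xy: "x * y = 1" using nonzero_invertible[OF x0] by blast
  have xyp: "x ^ d * y ^ d = 1" for d by (metis xy power_mult_distrib power_one)
  have cj: "coeff P j \<noteq> 0" using ij M0 by auto
  have ci: "coeff P i \<noteq> 0" using ij M0 by auto
  define A where "A = {..degree P} - {i}"
  have fA: "finite A" by (simp add: A_def)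
  have jA: "j \<in> A" using ij cj le_degree unfolding A_def by auto
  have iD: "i \<in> {..degree P}" using ci le_degree by auto
  define e where "e n = (if i < n then coeff P n * x ^ (n - i) else coeff P n * y ^ (i - n))" for n
  define T where "T n = (if i < n then monom (coeff P n) i * (monom 1 (n - i) + [:x ^ (n - i):])
       else monom (coeff P n * y ^ (i - n)) n * (monom 1 (i - n) + [:x ^ (i - n):]))" for n
  have TJ: "T n \<in> ideal_gen ?S" if "n \<noteq> i" for n
  proof (cases "i < n")
    case True
    have "monom 1 (n - i) + [:x ^ (n - i):] \<in> ?S" using True by auto
    then show ?thesis unfolding T_def using True by (simp add: ig_gen)
  next
    case False
    have "monom 1 (i - n) + [:x ^ (i - n):] \<in> ?S" using False that by auto
    then show ?thesis unfolding T_def using False by (simp add: ig_gen)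
  qed
  have Teq: "T n = monom (coeff P n) n + monom (e n) i" if "n \<noteq> i" for n
  proof (cases "i < n")
    case True
    then show ?thesis unfolding T_def e_def
      by (simp add: distrib_left mult_monom monom_mult_const add.commute smult_monom mult.commute)
  next
    case False
    then have ni: "n < i" using that by simp
    have "T n = monom (coeff P n * y ^ (i - n)) (n + (i - n)) + monom (coeff P n * y ^ (i - n) * x ^ (i - n)) n"
      unfolding T_def using False by (simp add: distrib_left mult_monom monom_mult_const smult_monom mult_ac)
    also have "\<dots> = monom (e n) i + monom (coeff P n) n"
      using ni xyp[of "i - n"] by (simp add: e_def mult.assoc mult.commute[of "y ^ _"])
    finally show ?thesis by (simp add: add.commute)
  qed
  have ex: "e n * x ^ i = coeff P n * x ^ n" for n
  proof (cases "i < n")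
    case True
    then have "x ^ n = x ^ (n - i) * x ^ i" by (simp add: power_add[symmetric])
    then show ?thesis using True by (simp add: e_def mult.assoc)
  next
    case False
    then have "x ^ i = x ^ (i - n) * x ^ n" by (simp add: power_add[symmetric])
    then have "e n * x ^ i = coeff P n * (x ^ (i - n) * y ^ (i - n)) * x ^ n"
      using False by (simp add: e_def mult_ac)
    then show ?thesis using xyp by simp
  qed
  have canc: "y ^ i * (a * x ^ i) = a" for a using xyp[of i] by (simp add: mult_ac)
  have ele: "qf_le (e n) (coeff P i)" for n
  proof -
    have "qf_le (e n * x ^ i) (coeff P i * x ^ i)" using ex poly_mono_le ij M_def by metis
    then show ?thesis using qf_le_mult[of _ _ "y ^ i"] canc by metis
  qed
  have ej: "e j = coeff P i"
  proof -
    have "e j * x ^ i = coeff P i * x ^ i" using ex ij by simp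
    then show ?thesis using canc by metis
  qed
  have se: "(\<Sum>n\<in>A. e n) = coeff P i"
    using qf_sum_le[OF fA, of e, OF ele] qf_le_sum[OF fA jA, of e] ej qf_le_antisym by metis
  have "(\<Sum>n\<in>A. T n) = (\<Sum>n\<in>A. monom (coeff P n) n) + monom (coeff P i) i"
    using Teq by (simp add: A_def sum.distrib monom_sum[symmetric] se[unfolded A_def])
  also have "\<dots> = P"
    using sum.remove[OF _ iD, of "\<lambda>n. monom (coeff P n) n"] poly_as_sum_of_monoms[of P]
    by (simp add: A_def add.commute)
  finally have "P = (\<Sum>n\<in>A. T n)" by simp
  moreover have "(\<Sum>n\<in>A. T n) \<in> ideal_gen ?S" using fA TJ by (intro ig_sum) (auto simp: A_def)
  ultimately show ?thesis by simp
qed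

lemma rop_add: "rat_of_poly (a + b) = rat_of_poly a + rat_of_poly b"
  unfolding rat_of_poly_def by (simp add: plus_ratpoly.abs_eq ratrel_refl)

lemma rop_mult: "rat_of_poly (a * b) = rat_of_poly a * rat_of_poly b"
  unfolding rat_of_poly_def by (simp add: times_ratpoly.abs_eq ratrel_refl)

lemma rop_zero: "rat_of_poly 0 = 0"
  unfolding rat_of_poly_def by (simp add: zero_ratpoly_def)

lemma rop_one: "rat_of_poly 1 = 1"
  unfolding rat_of_poly_def by (simp add: one_ratpoly_def)

lemma rop_power: "rat_of_poly (a ^ k) = rat_of_poly a ^ k"
  by (induct k) (simp_all add: rop_one rop_mult)

lemma rop_sum: "rat_of_poly (sum f A) = (\<Sum>a\<in>A. rat_of_poly (f a))"
  by (induct A rule: infinite_finite_induct) (simp_all add: rop_zero rop_add)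

lemma rop_surj: "\<exists>P. rat_of_poly P = F"
  unfolding rat_of_poly_def by (metis Quotient_ratpoly Quotient_abs_rep)

lemma rop_eq: "R \<noteq> 0 \<Longrightarrow> R * P = R * Q \<Longrightarrow> rat_of_poly P = rat_of_poly Q"
  unfolding rat_of_poly_def by (metis ratpoly.abs_eq_iff ratrel_def)

lemma lin_pow_coeff:
  "coeff ([:x, 1:] ^ k) m = (if m \<le> k then (x::'a::qf_char1) ^ (k - m) else 0)"
proof (induction k arbitrary: m)
  case 0 then show ?case by (cases m) auto
next
  case (Suc k)
  note IH = Suc.IH
  have "[:x, 1:] ^ Suc k = smult x ([:x, 1:] ^ k) + pCons 0 ([:x, 1:] ^ k)"
    by simp
  then have "coeff ([:x, 1:] ^ Suc k) m
      = x * coeff ([:x, 1:] ^ k) m + (case m of 0 \<Rightarrow> 0 | Suc m' \<Rightarrow> coeff ([:x, 1:] ^ k) m')"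
    by (simp add: coeff_pCons)
  also have "\<dots> = (if m \<le> Suc k then x ^ (Suc k - m) else 0)"
  proof (cases m)
    case 0 then show ?thesis using IH by simp
  next
    case (Suc m')
    show ?thesis
    proof (cases "m' < k")
      case True
      then have "x * x ^ (k - Suc m') = x ^ (k - m')" by (simp add: Suc_diff_Suc power_Suc[symmetric])
      then show ?thesis using Suc True IH by (simp add: qf_add_idem)
    next
      case False
      then show ?thesis using Suc IH by (auto simp: le_Suc_eq)
    qed
  qed
  finally show ?case .
qed

lemma key_ident:
  "[:x, 1:] ^ k * (monom 1 k + [:(x::'a::qf_char1) ^ k:]) = [:x, 1:] ^ k * [:x, 1:] ^ k"
proof (rule poly_eqI)
  fix m
  have "[:x, 1:] ^ k * (monom 1 k + [:x ^ k:]) = monom 1 k * [:x, 1:] ^ k + smult (x ^ k) ([:x, 1:] ^ k)"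
    by (simp add: distrib_left mult.commute)
  then have "coeff ([:x, 1:] ^ k * (monom 1 k + [:x ^ k:])) m
     = (if m < k then 0 else coeff ([:x, 1:] ^ k) (m - k)) + x ^ k * coeff ([:x, 1:] ^ k) m"
    by (simp add: coeff_monom_mult)
  also have "\<dots> = (if m \<le> k + k then x ^ (k + k - m) else 0)"
    unfolding lin_pow_coeff
    by (auto simp: power_add[symmetric] qf_add_idem)
  also have "\<dots> = coeff ([:x, 1:] ^ k * [:x, 1:] ^ k) m"
    by (simp add: power_add[symmetric] lin_pow_coeff)
  finally show "coeff ([:x, 1:] ^ k * (monom 1 k + [:x ^ k:])) m = coeff ([:x, 1:] ^ k * [:x, 1:] ^ k) m" .
qed

lemma rop_gen: "rat_of_poly (monom 1 k + [:(x::'a::qf_char1) ^ k:]) = rat_of_poly [:x, 1:] ^ k"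
proof -
  have "coeff ([:x, 1:] ^ k) k = 1" by (simp add: lin_pow_coeff)
  then have nz: "[:x, 1:] ^ k \<noteq> 0" by auto
  show ?thesis using rop_eq[OF nz key_ident] by (simp add: rop_power)
qed

lemma lin_as_gen: "[:x, 1:] = monom 1 1 + [:(x::'a::qf_char1) ^ 1:]"
  by (simp add: monom_Suc monom_0)

theorem theorem3p1:
  fixes x :: "'a::qf_char1"
  assumes "totally_ordered_qf TYPE('a)"
  shows "{P :: 'a poly. is_root P x} = ideal_gen {monom 1 k + [:x ^ k:] | k. k \<ge> 1}
       \<and> {F :: 'a ratpoly. rat_is_root F x} = ideal_gen {rat_of_poly [:x, 1:]}"
proof -
  note tot = assms
  let ?S = "{monom 1 k + [:x ^ k:] | k. k \<ge> 1}"
  have inJ: "P \<in> ideal_gen ?S \<longleftrightarrow> is_root P x" for P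
  proof
    assume "is_root P x"
    then show "P \<in> ideal_gen ?S" by (intro maxroot_in_J[OF tot] root_imp_maxroot[OF tot])
  next
    assume "P \<in> ideal_gen ?S"
    then obtain n :: nat and f g where h: "\<forall>i<n. g i \<in> ?S" "P = (\<Sum>i<n. f i * g i)"
      using ig_elim by blast
    have "maxroot (g i) x" if iN: "i < n" for i
    proof -
      have "g i \<in> ?S" using h(1) iN by blast
      then obtain k where "k \<ge> 1" "g i = monom 1 k + [:x ^ k:]" by blast
      then show ?thesis using maxroot_gen by simp
    qed
    then have "maxroot P x" unfolding h(2)
      by (intro maxroot_sum[OF tot] maxroot_mult[OF tot]) simp_all
    then show "is_root P x" by (rule maxroot_imp_root)
  qed
  have A: "{P :: 'a poly. is_root P x} = ideal_gen ?S" using inJ by (simp add: set_eq_iff)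
  let ?r = "rat_of_poly [:x, 1:]"
  have B: "{F :: 'a ratpoly. rat_is_root F x} = ideal_gen {?r}"
  proof (intro set_eqI iffI)
    fix F assume "F \<in> {F. rat_is_root F x}"
    then obtain P where P: "rat_of_poly P = F" "is_root P x" unfolding rat_is_root_def by blast
    then obtain n :: nat and f g where h: "\<forall>i<n. g i \<in> ?S" "P = (\<Sum>i<n. f i * g i)"
      using ig_elim inJ by blast
    define k where "k i = (SOME k. k \<ge> 1 \<and> g i = monom 1 k + [:x ^ k:])" for i
    have k: "k i \<ge> 1 \<and> g i = monom 1 (k i) + [:x ^ k i:]" if "i < n" for i
    proof -
      have "g i \<in> ?S" using h(1) that by blast
      then have "\<exists>k. k \<ge> 1 \<and> g i = monom 1 k + [:x ^ k:]" by blast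
      then show ?thesis unfolding k_def by (rule someI_ex)
    qed
    have "F = (\<Sum>i<n. rat_of_poly (f i) * rat_of_poly (g i))"
      using P h by (simp add: rop_sum rop_mult)
    also have "\<dots> = (\<Sum>i<n. (rat_of_poly (f i) * ?r ^ (k i - 1)) * ?r)"
    proof (rule sum.cong)
      fix i assume "i \<in> {..<n}"
      then have ki: "k i \<ge> 1" "g i = monom 1 (k i) + [:x ^ k i:]" using k by auto
      have "k i = Suc (k i - 1)" using ki(1) by simp
      then have "?r ^ k i = ?r ^ (k i - 1) * ?r" by (metis power_Suc2)
      then show "rat_of_poly (f i) * rat_of_poly (g i) = (rat_of_poly (f i) * ?r ^ (k i - 1)) * ?r"
        using ki(2) by (simp add: rop_gen mult.assoc)
    qed simp
    finally have "F = (\<Sum>i<n. (rat_of_poly (f i) * ?r ^ (k i - 1)) * (\<lambda>_. ?r) i)" by simp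
    then show "F \<in> ideal_gen {?r}" unfolding ideal_gen_def
      by (intro CollectI exI[of _ n] exI[of _ "\<lambda>i. rat_of_poly (f i) * ?r ^ (k i - 1)"] exI[of _ "\<lambda>_. ?r"]) simp
  next
    fix F assume "F \<in> ideal_gen {?r}"
    then obtain n :: nat and f g where h: "\<forall>i<n. g i \<in> {?r}" "F = (\<Sum>i<n. f i * g i)"
      using ig_elim by blast
    define q where "q i = (SOME P. rat_of_poly P = f i)" for i
    have q: "rat_of_poly (q i) = f i" for i unfolding q_def using rop_surj by (rule someI_ex)
    have "F = (\<Sum>i<n. f i * ?r)" using h by simp
    also have "\<dots> = rat_of_poly (\<Sum>i<n. q i * [:x, 1:])"
      unfolding rop_sum rop_mult q ..
    finally have "F = rat_of_poly (\<Sum>i<n. q i * [:x, 1:])" .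
    moreover have "(\<Sum>i<n. q i * [:x, 1:]) \<in> ideal_gen ?S"
    proof (rule ig_sum)
      fix i show "q i * [:x, 1:] \<in> ideal_gen ?S"
        unfolding lin_as_gen by (rule ig_gen) blast
    qed simp
    ultimately show "F \<in> {F. rat_is_root F x}" unfolding rat_is_root_def using inJ by blast
  qed
  show ?thesis using A B by blast
qed

end
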